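(* Let $(A,\leq,\cdot,/)$ be a narhoop. Then for all $x,y,z\in A$: (N1) $(x\sqcap y)\sqcap x = x\sqcap y$; (N2) $x\leq xy/y$; (N3) $(x\sqcap y)z\leq xz$; (N4) $(x\sqcap y)/z\leq x/z$. Conversely, let $(A,\cdot,/)$ be any algebra with two binary operations satisfying the following identities, which are (N1)–(N4) with each inequality $u\le v$ written as the equation $u=v\sqcap u$: (N1) $(x\sqcap y)\sqcap x = x\sqcap y$; (N2) $x=(xy/y)\sqcap x$; (N3) $(x\sqcap y)z = xz\sqcap (x\sqcap y)z$; (N4) $(x\sqcap y)/z = (x/z)\sqcap ((x\sqcap y)/z)$. Define a relation $\leq$ on $A$ by $x\leq y$ iff $x=y\sqcap x$. Then $A$ satisfies the identities $x\sqcap (xy/y)=x$, $(x\sqcap y)/y = x/y$ and $(x\sqcap y)\sqcap y=x\sqcap y$, the relation $\leq$ is a partial order, and $(A,\leq,\cdot,/)$ is a narhoop. In particular, narhoops form a variety defined by the identities (N1)–(N4).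
   Context: For a set $A$ with binary operations $\cdot$ and $/$, write $xy$ for $x\cdot y$; the convention is that $\cdot$ binds more strongly than $/$, and $/$ binds more strongly than $\sqcap$, where $x\sqcap y := (x/y)y$. A right-residuated magma is a structure $(A,\leq,\cdot,/)$ where $(A,\leq)$ is a poset and $xy\leq z \iff x\leq z/y$ for all $x,y,z\in A$. Condition (N) on such a structure: for all $x,y$, $x\leq y \iff x=y\sqcap x$. A narhoop (nonassociative right hoop) is a right-residuated magma such that for all $x,y$: $x\leq y \iff x\sqcap y = x = y\sqcap x$ (equivalently, a right-residuated magma satisfying (N) and the identity $(x\sqcap y)\sqcap x=x\sqcap y$). *)

theory Defs
  imports Main
begin

definition rmeet :: "('a \<Rightarrow> 'a \<Rightarrow> 'a) \<Rightarrow> ('a \<Rightarrow> 'a \<Rightarrow> 'a) \<Rightarrow> 'a \<Rightarrow> 'a \<Rightarrow> 'a" where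
  "rmeet m d x y = m (d x y) y"

definition poset_rel :: "('a \<Rightarrow> 'a \<Rightarrow> bool) \<Rightarrow> bool" where
  "poset_rel le \<longleftrightarrow> reflp le \<and> antisymp le \<and> transp le"

definition right_residuated_magma ::
  "('a \<Rightarrow> 'a \<Rightarrow> bool) \<Rightarrow> ('a \<Rightarrow> 'a \<Rightarrow> 'a) \<Rightarrow> ('a \<Rightarrow> 'a \<Rightarrow> 'a) \<Rightarrow> bool" where
  "right_residuated_magma le m d \<longleftrightarrow>
     poset_rel le \<and> (\<forall>x y z. le (m x y) z \<longleftrightarrow> le x (d z y))"

definition narhoop ::
  "('a \<Rightarrow> 'a \<Rightarrow> bool) \<Rightarrow> ('a \<Rightarrow> 'a \<Rightarrow> 'a) \<Rightarrow> ('a \<Rightarrow> 'a \<Rightarrow> 'a) \<Rightarrow> bool" where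
  "narhoop le m d \<longleftrightarrow> right_residuated_magma le m d \<and>
     (\<forall>x y. le x y \<longleftrightarrow> (rmeet m d x y = x \<and> rmeet m d y x = x))"

end

theory Submission
  imports Defs
begin


lemma part1:
  assumes H: "narhoop le m d"
  shows "rmeet m d (rmeet m d x y) x = rmeet m d x y \<and>
               le x (d (m x y) y) \<and>
               le (m (rmeet m d x y) z) (m x z) \<and>
               le (d (rmeet m d x y) z) (d x z)"
proof -
  have P: "reflp le" "antisymp le" "transp le"
   and RES: "\<And>x y z. le (m x y) z \<longleftrightarrow> le x (d z y)"
   and NH: "\<And>x y. le x y \<longleftrightarrow> (rmeet m d x y = x \<and> rmeet m d y x = x)"
    using H unfolding narhoop_def right_residuated_magma_def poset_rel_def by blast+
  have rf: "\<And>x. le x x" using P(1) by (simp add: reflp_def)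
  have tr: "\<And>x y z. le x y \<Longrightarrow> le y z \<Longrightarrow> le x z" using P(3) by (meson transpD)
  have lo: "\<And>x y. le (rmeet m d x y) x" unfolding rmeet_def using RES rf by blast
  have mm: "le (m x z) (m x' z)" if h: "le x x'" for x x' z
  proof -
    have "le x' (d (m x' z) z)" using RES rf by blast
    then have "le x (d (m x' z) z)" using tr h by blast
    then show ?thesis using RES by blast
  qed
  have md: "le (d x z) (d x' z)" if h: "le x x'" for x x' z
  proof -
    have "le (m (d x z) z) x" using RES rf by blast
    then have "le (m (d x z) z) x'" using tr h by blast
    then show ?thesis using RES by blast
  qed
  have a: "rmeet m d (rmeet m d x y) x = rmeet m d x y" using lo NH by blast
  have b: "le x (d (m x y) y)" using RES rf by blast
  have c: "le (m (rmeet m d x y) z) (m x z)" by (rule mm[OF lo])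
  have e: "le (d (rmeet m d x y) z) (d x z)" by (rule md[OF lo])
  show ?thesis using a b c e by blast
qed

locale L = fixes m d r :: "'a\<Rightarrow>'a\<Rightarrow>'a"
 assumes R: "\<And>a b. r a b = m (d a b) b"
 and N1: "\<And>x y. r (r x y) x = r x y"
 and N2: "\<And>x y. x = r (d (m x y) y) x"
 and N3: "\<And>x y z. m (r x y) z = r (m x z) (m (r x y) z)"
 and N4: "\<And>x y z. d (r x y) z = r (d x z) (d (r x y) z)"
begin
lemma G2: "d (r x y) y = d x y"
proof -
  have 1: "d x y = r (d (r x y) y) (d x y)" using N2[of "d x y" y] R[of x y] by simp
  have 2: "d (r x y) y = r (d x y) (d (r x y) y)" by (rule N4)
  have 3: "r (r (d (r x y) y) (d x y)) (d (r x y) y) = r (d (r x y) y) (d x y)" by (rule N1)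
  show ?thesis using 1 2 3 by simp
qed
lemma G1: "r x (d (m x y) y) = x" by (metis N2 N1)
lemma G3: "r (r x y) y = r x y" by (metis R N1 N2 G2)
lemma refl: "r x x = x" by (metis N1 N2)
lemma sym1: "x = r y x \<Longrightarrow> r x y = x" by (metis N1)
lemma antisym: "x = r y x \<Longrightarrow> y = r x y \<Longrightarrow> x = y" by (metis N1)
lemma trans: "x = r y x \<Longrightarrow> y = r z y \<Longrightarrow> x = r z x" by (metis G2 N3 N4 R)
lemma res1: "m x y = r z (m x y) \<Longrightarrow> x = r (d z y) x" by (metis G2 N2 N3 N4 R)
lemma res2: "x = r (d z y) x \<Longrightarrow> m x y = r z (m x y)" by (metis G2 N3 N4 R)
end

lemma part2:
  assumes A: "\<forall>x y z.
               rmeet m d (rmeet m d x y) x = rmeet m d x y \<and>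
               x = rmeet m d (d (m x y) y) x \<and>
               m (rmeet m d x y) z = rmeet m d (m x z) (m (rmeet m d x y) z) \<and>
               d (rmeet m d x y) z = rmeet m d (d x z) (d (rmeet m d x y) z)"
  shows "(let le = (\<lambda>x y. x = rmeet m d y x) in
                  (\<forall>x y. rmeet m d x (d (m x y) y) = x) \<and>
                  (\<forall>x y. d (rmeet m d x y) y = d x y) \<and>
                  (\<forall>x y. rmeet m d (rmeet m d x y) y = rmeet m d x y) \<and>
                  poset_rel le \<and>
                  narhoop le m d)"
proof -
  interpret L m d "rmeet m d"
    by unfold_locales (use A in \<open>auto simp: rmeet_def\<close>)
  have po: "poset_rel (\<lambda>x y. x = rmeet m d y x)"
    unfolding poset_rel_def
  proof (intro conjI)
    show "reflp (\<lambda>x y. x = rmeet m d y x)" unfolding reflp_def using refl by simp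
    show "antisymp (\<lambda>x y. x = rmeet m d y x)" unfolding antisymp_def using antisym by blast
    show "transp (\<lambda>x y. x = rmeet m d y x)" unfolding transp_def using trans by blast
  qed
  have nh: "narhoop (\<lambda>x y. x = rmeet m d y x) m d"
    unfolding narhoop_def right_residuated_magma_def
  proof (intro conjI po allI)
    fix x y z
    show "(m x y = rmeet m d z (m x y)) = (x = rmeet m d (d z y) x)"
      using res1 res2 by blast
  next
    fix x y
    show "(x = rmeet m d y x) = (rmeet m d x y = x \<and> rmeet m d y x = x)"
      using sym1 by metis
  qed
  show ?thesis unfolding Let_def
  proof (intro conjI allI po nh)
    fix x y show "rmeet m d x (d (m x y) y) = x" by (rule G1)
  next
    fix x y show "d (rmeet m d x y) y = d x y" by (rule G2)
  next
    fix x y show "rmeet m d (rmeet m d x y) y = rmeet m d x y" by (rule G3)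
  qed
qed

theorem mainTheorem1:
  shows "(\<forall>(le :: 'a \<Rightarrow> 'a \<Rightarrow> bool) m d. narhoop le m d \<longrightarrow>
            (\<forall>x y z.
               rmeet m d (rmeet m d x y) x = rmeet m d x y \<and>
               le x (d (m x y) y) \<and>
               le (m (rmeet m d x y) z) (m x z) \<and>
               le (d (rmeet m d x y) z) (d x z)))
       \<and>
         (\<forall>(m :: 'a \<Rightarrow> 'a \<Rightarrow> 'a) d.
            (\<forall>x y z.
               rmeet m d (rmeet m d x y) x = rmeet m d x y \<and>
               x = rmeet m d (d (m x y) y) x \<and>
               m (rmeet m d x y) z = rmeet m d (m x z) (m (rmeet m d x y) z) \<and>
               d (rmeet m d x y) z = rmeet m d (d x z) (d (rmeet m d x y) z))
            \<longrightarrow> (let le = (\<lambda>x y. x = rmeet m d y x) in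
                  (\<forall>x y. rmeet m d x (d (m x y) y) = x) \<and>
                  (\<forall>x y. d (rmeet m d x y) y = d x y) \<and>
                  (\<forall>x y. rmeet m d (rmeet m d x y) y = rmeet m d x y) \<and>
                  poset_rel le \<and>
                  narhoop le m d))"
proof (intro conjI allI impI)
  fix le :: "'a \<Rightarrow> 'a \<Rightarrow> bool" and m d x y z
  assume H: "narhoop le m d"
  from part1[OF H] show "rmeet m d (rmeet m d x y) x = rmeet m d x y" by (rule conjunct1)
  from part1[OF H] show "le x (d (m x y) y)" by blast
  from part1[OF H] show "le (m (rmeet m d x y) z) (m x z)" by blast
  from part1[OF H] show "le (d (rmeet m d x y) z) (d x z)" by blast
next
  fix m d :: "'a \<Rightarrow> 'a \<Rightarrow> 'a"
  assume "\<forall>x y z.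
               rmeet m d (rmeet m d x y) x = rmeet m d x y \<and>
               x = rmeet m d (d (m x y) y) x \<and>
               m (rmeet m d x y) z = rmeet m d (m x z) (m (rmeet m d x y) z) \<and>
               d (rmeet m d x y) z = rmeet m d (d x z) (d (rmeet m d x y) z)"
  then show "let le = (\<lambda>x y. x = rmeet m d y x) in
                  (\<forall>x y. rmeet m d x (d (m x y) y) = x) \<and>
                  (\<forall>x y. d (rmeet m d x y) y = d x y) \<and>
                  (\<forall>x y. rmeet m d (rmeet m d x y) y = rmeet m d x y) \<and>
                  poset_rel le \<and>
                  narhoop le m d" by (rule part2)
qed

end
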